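(* Let $\epsilon>0$, $q>0$, and let $\Lambda_\epsilon$ be an $\epsilon$-lattice under the $\ell_2$ norm. For any $\boldsymbol\lambda\in\Lambda_\epsilon$, the expanded Voronoi region $\mathbf{Vor}^+(\boldsymbol\lambda)$ has volume at most $(1+2q)^d\,\mathbf{V}$.
   Context: A lattice is the set of integer combinations of a basis of $\mathbb{R}^d$. Under $\ell_2$, its packing radius $r_p$ is the supremum of $r$ such that balls of radius $r$ around distinct lattice points are disjoint and its cover radius $r_c$ is the infimum of $r$ such that balls of radius $r$ around lattice points cover $\mathbb{R}^d$; an $\epsilon$-lattice has $\epsilon=r_p\le r_c\le3\epsilon$. The Voronoi region of $\boldsymbol\lambda$ is $\mathbf{Vor}(\boldsymbol\lambda)=\{\mathbf{x}\in\mathbb{R}^d:\|\mathbf{x}-\boldsymbol\lambda\|_2<\|\mathbf{x}-\boldsymbol\lambda'\|_2\ \forall\boldsymbol\lambda'\in\Lambda_\epsilon\setminus\{\boldsymbol\lambda\}\}$; all Voronoi regions have a common volume $\mathbf{V}$. The expanded Voronoi region $\mathbf{Vor}^+(\boldsymbol\lambda)$ is the set of points within $\ell_2$ distance $2q\epsilon$ of $\mathbf{Vor}(\boldsymbol\lambda)$. *)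

theory Defs
  imports "HOL-Analysis.Analysis"
begin

text \<open>A lattice in the Euclidean space 'a (of dimension DIM('a)): the set of integer
  combinations of a basis of 'a, the basis being indexed by the standard basis Basis.\<close>
definition is_lattice :: "'a::euclidean_space set \<Rightarrow> bool" where
  "is_lattice L \<longleftrightarrow> (\<exists>b :: 'a \<Rightarrow> 'a.
     inj_on b Basis \<and> independent (b ` Basis) \<and> span (b ` Basis) = UNIV \<and>
     L = {(\<Sum>i\<in>Basis. of_int (c i) *\<^sub>R b i) | c :: 'a \<Rightarrow> int. True})"

definition packing_radius :: "'a::euclidean_space set \<Rightarrow> real" where
  "packing_radius L = Sup {r. r \<ge> 0 \<and>
     (\<forall>x\<in>L. \<forall>y\<in>L. x \<noteq> y \<longrightarrow> ball x r \<inter> ball y r = {})}"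

definition cover_radius :: "'a::euclidean_space set \<Rightarrow> real" where
  "cover_radius L = Inf {r. r \<ge> 0 \<and> (\<Union>x\<in>L. cball x r) = UNIV}"

definition eps_lattice :: "real \<Rightarrow> 'a::euclidean_space set \<Rightarrow> bool" where
  "eps_lattice \<epsilon> L \<longleftrightarrow> is_lattice L \<and> packing_radius L = \<epsilon> \<and>
     packing_radius L \<le> cover_radius L \<and> cover_radius L \<le> 3 * \<epsilon>"

definition Vor :: "'a::euclidean_space set \<Rightarrow> 'a \<Rightarrow> 'a set" where
  "Vor L m = {x. \<forall>m'\<in>L - {m}. dist x m < dist x m'}"

definition Vor_plus :: "real \<Rightarrow> real \<Rightarrow> 'a::euclidean_space set \<Rightarrow> 'a \<Rightarrow> 'a set" where
  "Vor_plus q \<epsilon> L m = {x. \<exists>y\<in>Vor L m. dist x y \<le> 2 * q * \<epsilon>}"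

end

theory Submission
  imports Defs
begin

lemma convex_lebesgue_sets:
  fixes S :: "'a::euclidean_space set"
  assumes "convex S" shows "S \<in> sets lebesgue"
proof -
  have "S - interior S \<subseteq> frontier S"
    using closure_subset by (auto simp: frontier_def)
  hence "negligible (S - interior S)"
    using negligible_subset negligible_convex_frontier[OF assms] by blast
  hence n: "S - interior S \<in> sets lebesgue"
    by (simp add: negligible_iff_null_sets null_setsD2)
  have "interior S \<in> sets lebesgue" by (simp add: borel_open)
  moreover have "S = interior S \<union> (S - interior S)" using interior_subset by blast
  ultimately show ?thesis using n by (metis sets.Un)
qed

lemma aff_dist:
  fixes a b m m' :: "'a::euclidean_space"
  assumes "u + v = 1" "u > 0" "v \<ge> 0"
    and "dist a m < dist a m'" "dist b m \<le> dist b m'"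
  shows "dist (u *\<^sub>R a + v *\<^sub>R b) m < dist (u *\<^sub>R a + v *\<^sub>R b) m'"
proof -
  define g where "g p = (dist p m)^2 - (dist p m')^2" for p :: 'a
  have gf: "g p = 2 * (p \<bullet> (m' - m)) + m \<bullet> m - m' \<bullet> m'" for p
    unfolding g_def dist_norm power2_norm_eq_inner
    by (simp add: inner_diff_left inner_diff_right inner_commute algebra_simps)
  have ga: "g a < 0" unfolding g_def using assms(4)
    by (simp add: power_strict_mono)
  have gb: "g b \<le> 0" unfolding g_def using assms(5)
    by (simp add: power_mono)
  have "g (u *\<^sub>R a + v *\<^sub>R b) = u * g a + v * g b"
    unfolding gf using assms(1)
    by (simp add: inner_add_left algebra_simps)
      (smt (verit) distrib_left mult.commute mult_cancel_left1)
  also have "\<dots> < 0" using ga gb assms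
    by (smt (verit) mult_nonneg_nonpos mult_pos_neg)
  finally have "(dist (u *\<^sub>R a + v *\<^sub>R b) m)^2 < (dist (u *\<^sub>R a + v *\<^sub>R b) m')^2"
    unfolding g_def by simp
  thus ?thesis using power_less_imp_less_base zero_le_dist by blast
qed

lemma convex_Vor: "convex (Vor L m)"
  unfolding convex_def
proof (intro allI impI ballI)
  fix x y :: 'a and u v :: real
  assume xy: "x \<in> Vor L m" "y \<in> Vor L m" and h: "0 \<le> u" "0 \<le> v" "u + v = 1"
  show "u *\<^sub>R x + v *\<^sub>R y \<in> Vor L m"
    unfolding Vor_def
  proof (unfold mem_Collect_eq, intro ballI)
    fix m' assume "m' \<in> L - {m}"
    hence "m' \<in> L" "m' \<noteq> m" by auto
    hence d: "dist x m < dist x m'" "dist y m < dist y m'" using xy unfolding Vor_def by auto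
    show "dist (u *\<^sub>R x + v *\<^sub>R y) m < dist (u *\<^sub>R x + v *\<^sub>R y) m'"
    proof (cases "u > 0")
      case True
      then show ?thesis using aff_dist[of u v x m m' y] h d by (simp add: less_imp_le)
    next
      case False
      then have "u = 0" "v = 1" using h by auto
      then show ?thesis using d by auto
    qed
  qed
qed

lemma packing_sep:
  fixes L :: "'a::euclidean_space set"
  assumes "packing_radius L = \<epsilon>" "x \<in> L" "y \<in> L" "x \<noteq> y"
  shows "2 * \<epsilon> \<le> dist x y"
proof (rule ccontr)
  assume c: "\<not> 2 * \<epsilon> \<le> dist x y"
  define S where "S = {r. r \<ge> 0 \<and> (\<forall>x\<in>L. \<forall>y\<in>L. x \<noteq> y \<longrightarrow> ball x r \<inter> ball y r = {})}"
  have "0 \<in> S" unfolding S_def by auto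
  moreover have "r \<le> dist x y / 2" if "r \<in> S" for r
  proof (rule ccontr)
    assume "\<not> r \<le> dist x y / 2"
    define z where "z = midpoint x y"
    have "dist x z = dist x y / 2" "dist y z = dist x y / 2"
      unfolding z_def by (simp_all add: dist_midpoint)
    hence "z \<in> ball x r \<inter> ball y r" using \<open>\<not> r \<le> dist x y / 2\<close> by auto
    thus False using that assms unfolding S_def by blast
  qed
  ultimately have "Sup S \<le> dist x y / 2" by (intro cSup_least) auto
  thus False using assms(1) c unfolding packing_radius_def S_def by simp
qed

lemma comb:
  fixes x y m :: "'a::euclidean_space" and q :: real
  assumes q: "q > 0"
  shows "(1 / (1 + 2*q)) *\<^sub>R y + (1 - 1 / (1 + 2*q)) *\<^sub>R (m + (1 / (2 * q)) *\<^sub>R (x - y))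
       = (1 / (1 + 2*q)) *\<^sub>R x + (1 - 1 / (1 + 2*q)) *\<^sub>R m"
proof -
  define t where "t = 1 / (1 + 2*q)"
  have e2: "(1 - t) * (1 / (2 * q)) = t" unfolding t_def using q by (simp add: field_simps)
  have "t *\<^sub>R y + (1 - t) *\<^sub>R (m + (1 / (2 * q)) *\<^sub>R (x - y))
     = t *\<^sub>R y + (1 - t) *\<^sub>R m + ((1 - t) * (1 / (2 * q))) *\<^sub>R (x - y)"
    by (simp only: scaleR_add_right scaleR_scaleR add.assoc)
  also have "\<dots> = t *\<^sub>R y + (1 - t) *\<^sub>R m + t *\<^sub>R (x - y)" by (simp only: e2)
  also have "\<dots> = t *\<^sub>R x + (1 - t) *\<^sub>R m" by (simp add: scaleR_diff_right)
  finally show ?thesis unfolding t_def .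
qed
lemma Tx:
  fixes x m :: "'a::euclidean_space" and q :: real
  assumes q: "q > 0"
  shows "(1 + 2*q) *\<^sub>R ((1 / (1 + 2*q)) *\<^sub>R x + (1 - 1 / (1 + 2*q)) *\<^sub>R m) + (m - (1 + 2*q) *\<^sub>R m) = x"
proof -
  have c: "1 + 2*q \<noteq> 0" using q by simp
  have "(1 + 2*q) *\<^sub>R ((1 / (1 + 2*q)) *\<^sub>R x + (1 - 1 / (1 + 2*q)) *\<^sub>R m) = x + (2*q) *\<^sub>R m"
    using c by (simp add: scaleR_add_right scaleR_diff_left field_simps)
  thus ?thesis by (simp add: scaleR_diff_left algebra_simps)
qed

theorem lemma30:
  fixes L :: "'a::euclidean_space set" and \<epsilon> q :: real and m :: 'a
  assumes "\<epsilon> > 0" and "q > 0" and "eps_lattice \<epsilon> L" and "m \<in> L"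
  shows "emeasure lebesgue (Vor_plus q \<epsilon> L m)
           \<le> ennreal ((1 + 2 * q) ^ DIM('a)) * emeasure lebesgue (Vor L m)"
proof -
  have pr: "packing_radius L = \<epsilon>" using assms(3) by (simp add: eps_lattice_def)
  define c where "c = 1 + 2 * q"
  have c0: "c > 0" using assms(2) c_def by simp
  define T where "T z = c *\<^sub>R z + (m - c *\<^sub>R m)" for z
  have sub: "Vor_plus q \<epsilon> L m \<subseteq> T ` Vor L m"
  proof
    fix x assume "x \<in> Vor_plus q \<epsilon> L m"
    then obtain y where y: "y \<in> Vor L m" "dist x y \<le> 2 * q * \<epsilon>"
      unfolding Vor_plus_def by auto
    define b where "b = m + (1 / (2 * q)) *\<^sub>R (x - y)"
    define t where "t = 1 / c"
    define p where "p = t *\<^sub>R y + (1 - t) *\<^sub>R b"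
    define p' where "p' = t *\<^sub>R x + (1 - t) *\<^sub>R m"
    have pp: "p = p'" unfolding p_def p'_def t_def c_def b_def by (rule comb[OF assms(2)])
    have bm: "dist b m \<le> \<epsilon>"
    proof -
      have "dist b m = (1 / (2 * q)) * dist x y"
        unfolding b_def dist_norm using assms(2) by simp
      also have "\<dots> \<le> (1 / (2 * q)) * (2 * q * \<epsilon>)"
        using y(2) assms(2) by (intro mult_left_mono) auto
      finally show ?thesis using assms(2) by simp
    qed
    have "p \<in> Vor L m"
      unfolding Vor_def
    proof (unfold mem_Collect_eq, intro ballI)
      fix m' assume "m' \<in> L - {m}"
      hence "m' \<in> L" "m' \<noteq> m" by auto
      have "2 * \<epsilon> \<le> dist m m'" using packing_sep[OF pr assms(4) \<open>m' \<in> L\<close>] \<open>m' \<noteq> m\<close> by auto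
      hence "dist b m \<le> dist b m'" using bm dist_triangle[of m m' b]
        by (simp add: dist_commute)
      moreover have "dist y m < dist y m'" using y(1) \<open>m' \<in> L\<close> \<open>m' \<noteq> m\<close>
        unfolding Vor_def by auto
      ultimately show "dist p m < dist p m'" unfolding p_def
        using c0 assms(2) by (intro aff_dist) (auto simp: t_def c_def)
    qed
    moreover have "T p' = x"
      unfolding T_def p'_def t_def c_def using Tx[OF assms(2)] .
    ultimately show "x \<in> T ` Vor L m" unfolding pp by (rule rev_image_eqI[OF _ sym])
  qed
  have "convex (T ` Vor L m)"
  proof -
    have "T = (\<lambda>x. (m - c *\<^sub>R m) + c *\<^sub>R x)" unfolding T_def by (rule ext) (simp add: add.commute)
    thus ?thesis using convex_affinity[OF convex_Vor] by simp
  qed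
  hence "T ` Vor L m \<in> sets lebesgue" by (rule convex_lebesgue_sets)
  hence "emeasure lebesgue (Vor_plus q \<epsilon> L m) \<le> emeasure lebesgue (T ` Vor L m)"
    using sub by (rule emeasure_mono[rotated])
  also have "\<dots> = ennreal (c ^ DIM('a)) * emeasure lebesgue (Vor L m)"
    unfolding T_def using emeasure_lebesgue_affine[of c "m - c *\<^sub>R m" "Vor L m"] c0 by (simp add: abs_of_pos)
  finally show ?thesis by (simp add: c_def)
qed

end
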